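(* For any $P,N>0$ with $\frac NP\le\frac{L-1}{L}$ and any $L\in\mathbb{Z}_{\ge2}$, $$\overline{C}_{L-1}(P,N)\ge\frac12\left(1-\frac{LN}{(L-1)P}-\frac1{L-1}\ln\frac{L(P-N)}{P}\right).$$
   Context: $\mathcal{B}^n(r)$ is the closed Euclidean ball of radius $r$ centered at the origin. For $x_1,\dots,x_L\in\mathbb{R}^n$ with centroid $\bar x=\frac1L\sum_ix_i$, $\overline{\mathrm{rad}}^2(x_1,\dots,x_L)=\frac1L\sum_i\|x_i-\bar x\|_2^2$. A finite $\mathcal{C}\subseteq\mathcal{B}^n(\sqrt{nP})$ is $(P,N,L-1)$-average-radius list-decodable if every $L$ distinct points of $\mathcal{C}$ have $\overline{\mathrm{rad}}^2>nN$. Rate $R(\mathcal{C})=\frac1n\ln|\mathcal{C}|$. $\overline{C}_{L-1}(P,N)=\limsup_{n\to\infty}\sup R(\mathcal{C})$ over such codes in $\mathcal{B}^n(\sqrt{nP})$. *)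

theory Defs
  imports "HOL-Analysis.Analysis"
begin

text \<open>Points of R^n are represented as functions nat => real that vanish
  outside {0..<n} (extensional representation).\<close>

definition sqnorm :: "nat \<Rightarrow> (nat \<Rightarrow> real) \<Rightarrow> real" where
  "sqnorm n x = (\<Sum>i<n. (x i)\<^sup>2)"

definition euclid_ball :: "nat \<Rightarrow> real \<Rightarrow> (nat \<Rightarrow> real) set" where
  "euclid_ball n r = {x. (\<forall>i\<ge>n. x i = 0) \<and> sqrt (sqnorm n x) \<le> r}"

definition centroid :: "nat \<Rightarrow> (nat \<Rightarrow> real) set \<Rightarrow> (nat \<Rightarrow> real)" where
  "centroid n S = (\<lambda>i. if i < n then (\<Sum>x\<in>S. x i) / real (card S) else 0)"

definition avg_rad_sq :: "nat \<Rightarrow> (nat \<Rightarrow> real) set \<Rightarrow> real" where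
  "avg_rad_sq n S = (\<Sum>x\<in>S. sqnorm n (\<lambda>i. x i - centroid n S i)) / real (card S)"

text \<open>(P,N,L-1)-average-radius list-decodable code in B^n(sqrt(nP)).\<close>
definition avg_rad_list_decodable ::
  "nat \<Rightarrow> real \<Rightarrow> real \<Rightarrow> nat \<Rightarrow> (nat \<Rightarrow> real) set \<Rightarrow> bool" where
  "avg_rad_list_decodable n P N L C \<longleftrightarrow>
     finite C \<and> C \<subseteq> euclid_ball n (sqrt (real n * P)) \<and>
     (\<forall>S\<subseteq>C. card S = L \<longrightarrow> avg_rad_sq n S > real n * N)"

definition code_rate :: "nat \<Rightarrow> (nat \<Rightarrow> real) set \<Rightarrow> real" where
  "code_rate n C = ln (real (card C)) / real n"

definition avg_rad_capacity :: "nat \<Rightarrow> real \<Rightarrow> real \<Rightarrow> ereal" where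
  "avg_rad_capacity L P N =
     limsup (\<lambda>n. SUP C \<in> {C. avg_rad_list_decodable n P N L C}. ereal (code_rate n C))"

end

theory Submission
  imports Defs
begin

definition Wv :: "nat \<Rightarrow> real \<Rightarrow> (nat \<Rightarrow> real) set" where
  "Wv L r = PiE {..<L} (\<lambda>_. {r, -r})"

lemma Wv_finite: "finite (Wv L r)"
  unfolding Wv_def by (intro finite_PiE) auto

lemma Wv_sum_Suc:
  assumes "r \<noteq> 0"
  shows "(\<Sum>v\<in>Wv (Suc L) r. f v) = (\<Sum>v\<in>Wv L r. f (v(L:=r)) + f (v(L:=-r)))"
proof -
  have "(\<Sum>v\<in>Wv (Suc L) r. f v) = (\<Sum>(y,g)\<in>{r,-r} \<times> Wv L r. f (g(L:=y)))"
    unfolding Wv_def lessThan_Suc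
    by (intro sum.reindex_bij_witness[of _ "\<lambda>(y,g). g(L := y)" "\<lambda>g. (g L, g(L := undefined))"])
       (auto simp: PiE_def extensional_def)
  also have "\<dots> = (\<Sum>y\<in>{r,-r}. \<Sum>g\<in>Wv L r. f (g(L:=y)))"
    by (simp add: sum.cartesian_product)
  also have "\<dots> = (\<Sum>g\<in>Wv L r. f (g(L:=r))) + (\<Sum>g\<in>Wv L r. f (g(L:=-r)))"
    using assms by simp
  also have "\<dots> = (\<Sum>v\<in>Wv L r. f (v(L:=r)) + f (v(L:=-r)))" by (simp add: sum.distrib)
  finally show ?thesis .
qed

lemma sum_upd_lessThan: "(\<Sum>j<Suc L. (v(L:=y)) j) = (\<Sum>j<L. v j) + (y::real)"
proof -
  have "(\<Sum>j<L. (v(L:=y)) j) = (\<Sum>j<L. v j)" by (intro sum.cong) auto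
  then show ?thesis by simp
qed

lemma even_binom:
  fixes s r :: real
  shows "(s + r)^(2*k) + (s - r)^(2*k) = 2 * (\<Sum>j<Suc k. real ((2*k) choose (2*j)) * s^(2*j) * r^(2*k-2*j))"
proof -
  define h where "h i = real ((2*k) choose i) * s^i * (r^(2*k-i) + (-r)^(2*k-i))" for i
  have "(s + r)^(2*k) + (s - r)^(2*k) = (\<Sum>i\<le>2*k. h i)"
    unfolding h_def binomial_ring[of s r] binomial_ring[of s "-r", unfolded diff_conv_add_uminus[symmetric]]
    by (simp add: sum.distrib[symmetric] algebra_simps)
  also have "\<dots> = (\<Sum>i<2*Suc k. h i)"
  proof -
    have "{..<2*Suc k} = insert (2*k+1) {..2*k}" by auto
    then show ?thesis by (simp add: h_def)
  qed
  also have "\<dots> = (\<Sum>i<2*Suc k. if even i then h i else 0)"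
  proof (intro sum.cong refl)
    fix i assume i: "i \<in> {..<2*Suc k}"
    show "h i = (if even i then h i else 0)"
    proof (cases "even i")
      case False
      show ?thesis
      proof (cases "i \<le> 2*k")
        case True
        with False have "odd (2*k - i)" by auto
        then have "(-r)^(2*k-i) = - (r^(2*k-i))" by (simp add: power_minus_odd)
        then show ?thesis using False by (simp add: h_def)
      next
        case False2: False
        then show ?thesis by (simp add: h_def)
      qed
    qed simp
  qed
  also have "\<dots> = (\<Sum>j<Suc k. h (2*j))"
    using sum_split_even_odd[where f=h and g="\<lambda>_. 0" and n="Suc k"] by simp
  also have "\<dots> = 2 * (\<Sum>j<Suc k. real ((2*k) choose (2*j)) * s^(2*j) * r^(2*k-2*j))"
  proof -
    have "h (2*j) = 2 * (real ((2*k) choose (2*j)) * s^(2*j) * r^(2*k-2*j))" for j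
    proof -
      have "even (2*k - 2*j)" by auto
      then have "(-r)^(2*k-2*j) = r^(2*k-2*j)" by (simp add: power_minus_even)
      then show ?thesis by (simp add: h_def)
    qed
    then show ?thesis by (simp add: sum_distrib_left)
  qed
  finally show ?thesis .
qed

lemma fact_double: "2^m * fact m \<le> (fact (2*m) :: real)"
proof (induction m)
  case 0 then show ?case by simp
next
  case (Suc m)
  have "(2::real)^Suc m * fact (Suc m) = (2 * (real m+1)) * (2^m * fact m)"
    by (simp add: algebra_simps)
  also have "\<dots> \<le> ((2*real m+2)*(2*real m+1)) * fact (2*m)"
    using Suc by (intro mult_mono) auto
  also have "\<dots> = fact (2 * Suc m)"
    by (simp add: algebra_simps)
  finally show ?case .
qed

lemma term_ineq:
  assumes "j \<le> k"
  shows "real ((2*k) choose (2*j)) * (fact (2*j) / (2^j * fact j))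
         \<le> real (k choose j) * (fact (2*k) / (2^k * fact k))"
proof -
  obtain m where k: "k = j + m" using assms le_Suc_ex by blast
  have e1: "2*k - 2*j = 2*m" using k by simp
  have "real ((2*k) choose (2*j)) * (fact (2*j) / (2^j * fact j))
        = fact (2*k) / (fact (2*m) * 2^j * fact j)"
    using assms binomial_fact[of "2*j" "2*k", unfolded e1] by (simp add: field_simps)
  also have "\<dots> \<le> fact (2*k) / (2^m * fact m * 2^j * fact j)"
    using fact_double[of m] by (intro divide_left_mono mult_right_mono mult_pos_pos) auto
  also have "\<dots> = real (k choose j) * (fact (2*k) / (2^k * fact k))"
    using assms by (simp add: binomial_fact k field_simps power_add)
  finally show ?thesis .
qed

lemma moment_bound:
  assumes "r \<noteq> 0"
  shows "(\<Sum>v\<in>Wv L r. (\<Sum>j<L. v j)^(2*k)) \<le> 2^L * (real L * r^2)^k * (fact (2*k) / (2^k * fact k))"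
proof (induction L arbitrary: k)
  case 0
  then show ?case by (cases k) (auto simp: Wv_def)
next
  case (Suc L)
  define M where "M j = (\<Sum>v\<in>Wv L r. (\<Sum>i<L. v i)^(2*j))" for j
  have "(\<Sum>v\<in>Wv (Suc L) r. (\<Sum>j<Suc L. v j)^(2*k))
     = (\<Sum>v\<in>Wv L r. ((\<Sum>j<L. v j) + r)^(2*k) + ((\<Sum>j<L. v j) - r)^(2*k))"
    by (subst Wv_sum_Suc[OF assms]) (simp only: sum_upd_lessThan diff_conv_add_uminus)
  also have "\<dots> = (\<Sum>v\<in>Wv L r. 2 * (\<Sum>j<Suc k. real ((2*k) choose (2*j)) * (\<Sum>i<L. v i)^(2*j) * r^(2*k-2*j)))"
    by (simp add: even_binom)
  also have "\<dots> = 2 * (\<Sum>j<Suc k. real ((2*k) choose (2*j)) * r^(2*k-2*j) * M j)"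
    unfolding M_def by (simp add: sum_distrib_left sum_distrib_right sum.swap[of _ "Wv L r"] mult_ac)
  also have "\<dots> \<le> 2 * (\<Sum>j<Suc k. real ((2*k) choose (2*j)) * r^(2*k-2*j) *
                  (2^L * (real L * r^2)^j * (fact (2*j) / (2^j * fact j))))"
    unfolding M_def
    by (intro mult_left_mono sum_mono Suc.IH mult_nonneg_nonneg)
       (auto intro: zero_le_even_power)
  also have "\<dots> = 2^Suc L * (r^2)^k * (\<Sum>j<Suc k. real L ^ j * (real ((2*k) choose (2*j)) * (fact (2*j) / (2^j * fact j))))"
  proof -
    have rr: "r^(2*k-2*j) * (r^2)^j = (r^2)^k" if "j < Suc k" for j
    proof -
      have "2*k-2*j + 2*j = 2*k" using that by simp
      then have "r^(2*k-2*j) * r^(2*j) = r^(2*k)" by (metis power_add)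
      then show ?thesis by (simp add: power_mult)
    qed
    have "real ((2*k) choose (2*j)) * r^(2*k-2*j) * (2^L * (real L * r^2)^j * (fact (2*j) / (2^j * fact j)))
        = 2^L * (r^2)^k * (real L ^ j * (real ((2*k) choose (2*j)) * (fact (2*j) / (2^j * fact j))))"
      if "j < Suc k" for j
    proof -
      have "real ((2*k) choose (2*j)) * r^(2*k-2*j) * (2^L * (real L * r^2)^j * (fact (2*j) / (2^j * fact j)))
          = 2^L * (r^(2*k-2*j) * (r^2)^j) * (real L ^ j * (real ((2*k) choose (2*j)) * (fact (2*j) / (2^j * fact j))))"
        by (simp only: power_mult_distrib mult_ac)
      then show ?thesis using rr[OF that] by simp
    qed
    then have "(\<Sum>j<Suc k. real ((2*k) choose (2*j)) * r^(2*k-2*j) * (2^L * (real L * r^2)^j * (fact (2*j) / (2^j * fact j))))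
       = (\<Sum>j<Suc k. 2^L * (r^2)^k * (real L ^ j * (real ((2*k) choose (2*j)) * (fact (2*j) / (2^j * fact j)))))"
      by (intro sum.cong) auto
    then show ?thesis unfolding sum_distrib_left[symmetric] by (simp add: mult_ac)
  qed
  also have "\<dots> \<le> 2^Suc L * (r^2)^k * (\<Sum>j<Suc k. real L ^ j * (real (k choose j) * (fact (2*k) / (2^k * fact k))))"
    by (intro mult_left_mono sum_mono term_ineq) auto
  also have "\<dots> = 2^Suc L * (r^2)^k * ((real L + 1)^k * (fact (2*k) / (2^k * fact k)))"
  proof -
    have b: "(real L + 1)^k = (\<Sum>j\<le>k. real (k choose j) * real L^j)"
      using binomial_ring[of "real L" 1 k] by simp
    have "(\<Sum>j<Suc k. real L ^ j * (real (k choose j) * (fact (2*k) / (2^k * fact k))))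
        = (\<Sum>j\<le>k. real (k choose j) * real L^j) * (fact (2*k) / (2^k * fact k))"
      unfolding lessThan_Suc_atMost sum_distrib_right by (simp add: mult_ac)
    then show ?thesis unfolding b by (simp add: add.commute)
  qed
  also have "\<dots> = 2^Suc L * (real (Suc L) * r^2)^k * (fact (2*k) / (2^k * fact k))"
    by (simp add: power_mult_distrib mult_ac add.commute)
  finally show ?case .
qed

lemma gchoose_half: "((-1/2::real) gchoose k) * (-2)^k = fact (2*k) / (2^k * (fact k)^2)"
proof (induction k)
  case 0 then show ?case by simp
next
  case (Suc k)
  have rec: "real (Suc k) * ((-1/2::real) gchoose Suc k) = (-1/2 - real k) * ((-1/2::real) gchoose k)"
    using gbinomial_mult_1[of "-1/2::real" k] by (simp add: algebra_simps)
  have "((-1/2::real) gchoose Suc k) * (-2)^Suc k = (2*real k + 1)/(real k + 1) * (((-1/2::real) gchoose k) * (-2)^k)"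
  proof -
    define c where "c = (-1/2 - real k) / real (Suc k)"
    have eq: "((-1/2::real) gchoose Suc k) = c * ((-1/2::real) gchoose k)"
      using rec unfolding c_def by (simp add: field_simps)
    have c2: "c * (-2) = (2*real k + 1)/(real k + 1)"
      unfolding c_def by (simp add: field_simps)
    have "((-1/2::real) gchoose Suc k) * (-2)^Suc k = (c * (-2)) * (((-1/2::real) gchoose k) * (-2)^k)"
      unfolding eq power_Suc by (simp only: mult_ac)
    then show ?thesis unfolding c2 .
  qed
  also have "\<dots> = fact (2 * Suc k) / (2^Suc k * (fact (Suc k))^2)"
  proof -
    have f2: "fact (2 * Suc k) = (2*real k+2)*(2*real k+1)*(fact (2*k)::real)"
      by (simp add: algebra_simps)
    have f1: "fact (Suc k) = (real k + 1) * (fact k :: real)" by simp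
    have "fact (2*Suc k) / (2^Suc k * (fact (Suc k))^2) = (fact (2*k) / (2^k * (fact k)^2)) * ((2*real k+1)/(real k+1))"
      unfolding f2 f1 power2_eq_square
      by (simp add: divide_simps)
    then show ?thesis unfolding Suc.IH by (simp add: mult_ac)
  qed
  finally show ?case .
qed

lemma exp_sums_real: "(\<lambda>n. x^n / fact n) sums exp (x::real)"
  using exp_converges[of x] by (simp add: divide_inverse mult.commute)

lemma mgf_bound:
  assumes "r \<noteq> 0" "L > 0" "0 \<le> lam" "lam < 1/2"
  shows "(\<Sum>v\<in>Wv L r. exp (lam/(real L * r^2) * (\<Sum>j<L. v j)^2)) \<le> 2^L * (1 - 2*lam) powr (-1/2)"
proof -
  define c where "c = lam/(real L * r^2)"
  have c0: "c \<ge> 0" unfolding c_def using assms by auto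
  have cL: "c * (real L * r^2) = lam" unfolding c_def using assms by auto
  have s1: "(\<lambda>k. \<Sum>v\<in>Wv L r. (c * (\<Sum>j<L. v j)^2)^k / fact k) sums (\<Sum>v\<in>Wv L r. exp (c * (\<Sum>j<L. v j)^2))"
    by (intro sums_sum exp_sums_real)
  have s2: "(\<lambda>k. 2^L * (((-1/2) gchoose k) * (-2*lam)^k)) sums (2^L * (1-2*lam) powr (-1/2))"
  proof -
    have "\<bar>-2*lam\<bar> < 1" using assms by auto
    from gen_binomial_real[OF this, of "-1/2"]
    have "(\<lambda>k. ((-1/2) gchoose k) * (-2*lam)^k) sums ((1-2*lam) powr (-1/2))" by simp
    then show ?thesis by (rule sums_mult)
  qed
  have le: "(\<Sum>v\<in>Wv L r. (c * (\<Sum>j<L. v j)^2)^k / fact k) \<le> 2^L * (((-1/2) gchoose k) * (-2*lam)^k)" for k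
  proof -
    have "(\<Sum>v\<in>Wv L r. (c * (\<Sum>j<L. v j)^2)^k / fact k)
        = c^k / fact k * (\<Sum>v\<in>Wv L r. (\<Sum>j<L. v j)^(2*k))"
      by (simp add: sum_distrib_left power_mult_distrib power_mult)
    also have "\<dots> \<le> c^k / fact k * (2^L * (real L * r^2)^k * (fact (2*k) / (2^k * fact k)))"
      using c0 by (intro mult_left_mono moment_bound assms) auto
    also have "\<dots> = 2^L * (c * (real L * r^2))^k * (fact (2*k) / (2^k * (fact k)^2))"
      by (simp add: power_mult_distrib power2_eq_square mult_ac)
    also have "\<dots> = 2^L * (((-1/2) gchoose k) * (-2)^k) * lam^k"
      unfolding cL gchoose_half by simp
    also have "\<dots> = 2^L * (((-1/2) gchoose k) * (-2*lam)^k)"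
    proof -
      have "(-2*lam)^k = (-2)^k * lam^k" by (simp add: power_mult_distrib[symmetric])
      then show ?thesis by (simp add: mult_ac)
    qed
    finally show ?thesis .
  qed
  show ?thesis using sums_le[OF le s1 s2] unfolding c_def .
qed

definition Vc :: "real \<Rightarrow> nat \<Rightarrow> (nat \<Rightarrow> real) set" where
  "Vc r n = {x. (\<forall>i<n. x i = r \<or> x i = -r) \<and> (\<forall>i\<ge>n. x i = 0)}"

lemma Vc_0: "Vc r 0 = {\<lambda>_. 0}"
  unfolding Vc_def by auto

lemma Vc_Suc: "Vc r (Suc n) = (\<lambda>(x,s). x(n:=s)) ` (Vc r n \<times> {r,-r})"
proof (intro set_eqI iffI)
  fix y assume y: "y \<in> Vc r (Suc n)"
  have "y(n:=0) \<in> Vc r n" using y unfolding Vc_def by auto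
  moreover have "y n \<in> {r,-r}" using y unfolding Vc_def by auto
  moreover have "y = (y(n:=0))(n := y n)" by simp
  ultimately show "y \<in> (\<lambda>(x,s). x(n:=s)) ` (Vc r n \<times> {r,-r})"
    by (intro image_eqI[of _ _ "(y(n:=0), y n)"]) auto
next
  fix y assume "y \<in> (\<lambda>(x,s). x(n:=s)) ` (Vc r n \<times> {r,-r})"
  then obtain x s where "x \<in> Vc r n" "s \<in> {r,-r}" "y = x(n:=s)" by auto
  then show "y \<in> Vc r (Suc n)" unfolding Vc_def by (auto simp: less_Suc_eq)
qed

lemma Vc_inj: "inj_on (\<lambda>(x,s). x(n:=s)) (Vc r n \<times> {r,-r})"
proof (intro inj_onI)
  fix a b assume a: "a \<in> Vc r n \<times> {r,-r}" and b: "b \<in> Vc r n \<times> {r,-r}"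
    and eq: "(\<lambda>(x,s). x(n:=s)) a = (\<lambda>(x,s). x(n:=s)) b"
  obtain x s where ax: "a = (x,s)" by (cases a)
  obtain x' s' where bx: "b = (x',s')" by (cases b)
  have e: "x(n:=s) = x'(n:=s')" using eq ax bx by simp
  have "s = s'" using fun_cong[OF e, of n] by simp
  moreover have "x = x'"
  proof
    fix i show "x i = x' i"
    proof (cases "i = n")
      case True then show ?thesis using a b ax bx unfolding Vc_def by auto
    next
      case False then show ?thesis using fun_cong[OF e, of i] by simp
    qed
  qed
  ultimately show "a = b" using ax bx by simp
qed

lemma card_Vc: assumes "r \<noteq> 0" shows "card (Vc r n) = 2^n"
proof (induction n)
  case 0 then show ?case by (simp add: Vc_0)
next
  case (Suc n)
  have "card (Vc r (Suc n)) = card (Vc r n \<times> {r,-r})"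
    unfolding Vc_Suc by (rule card_image[OF Vc_inj])
  also have "\<dots> = 2^n * 2" using Suc assms by (simp add: card_cartesian_product)
  finally show ?case by simp
qed

lemma finite_Vc: assumes "r \<noteq> 0" shows "finite (Vc r n)"
  using card_Vc[OF assms, of n] by (intro card_ge_0_finite) simp

definition Tc :: "real \<Rightarrow> nat \<Rightarrow> nat \<Rightarrow> (nat \<Rightarrow> nat \<Rightarrow> real) set" where
  "Tc r L n = PiE {..<L} (\<lambda>_. Vc r n)"

lemma finite_Tc: assumes "r \<noteq> 0" shows "finite (Tc r L n)"
  unfolding Tc_def using finite_Vc[OF assms] by (intro finite_PiE) auto

lemma tuple_sum:
  fixes g :: "real \<Rightarrow> real"
  shows "(\<Sum>t\<in>Tc r L n. \<Prod>k<n. g (\<Sum>j<L. t j k)) = (\<Sum>v\<in>Wv L r. g (\<Sum>j<L. v j))^n"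
proof (induction n)
  case 0
  have "Tc r L 0 = {\<lambda>j\<in>{..<L}. (\<lambda>_. 0)}"
    unfolding Tc_def Vc_0 by (simp add: PiE_eq_singleton)
  then show ?case by simp
next
  case (Suc n)
  define ii where "ii = (\<lambda>(t::nat\<Rightarrow>nat\<Rightarrow>real,v::nat\<Rightarrow>real). (\<lambda>j. if j<L then (t j)(n := v j) else undefined))"
  define jj where "jj = (\<lambda>u::nat\<Rightarrow>nat\<Rightarrow>real. ((\<lambda>j. if j<L then (u j)(n:=0) else undefined), (\<lambda>j. if j<L then u j n else undefined)))"
  define A where "A t = (\<Prod>k<n. g (\<Sum>j<L. t j k))" for t :: "nat\<Rightarrow>nat\<Rightarrow>real"
  define B where "B v = g (\<Sum>j<L. v j)" for v :: "nat\<Rightarrow>real"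
  have "(\<Sum>u\<in>Tc r L (Suc n). \<Prod>k<Suc n. g (\<Sum>j<L. u j k)) = (\<Sum>(t,v)\<in>Tc r L n \<times> Wv L r. A t * B v)"
  proof (rule sum.reindex_bij_witness[of _ ii jj])
    fix u assume u: "u \<in> Tc r L (Suc n)"
    then have u1: "\<And>j. j < L \<Longrightarrow> u j \<in> Vc r (Suc n)" and u2: "\<And>j. j \<ge> L \<Longrightarrow> u j = undefined"
      unfolding Tc_def by (auto simp: PiE_def extensional_def)
    show "ii (jj u) = u"
      unfolding ii_def jj_def using u2 by (auto intro!: ext)
    have "(\<lambda>j. if j<L then (u j)(n:=0) else undefined) \<in> Tc r L n"
      unfolding Tc_def PiE_iff extensional_def
    proof (intro conjI ballI allI impI)
      fix j assume "j \<in> {..<L}"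
      then have "u j \<in> Vc r (Suc n)" using u1 by simp
      then show "(if j<L then (u j)(n:=0) else undefined) \<in> Vc r n"
        using \<open>j \<in> {..<L}\<close> unfolding Vc_def by auto
    qed simp
    moreover have "(\<lambda>j. if j<L then u j n else undefined) \<in> Wv L r"
      unfolding Wv_def PiE_iff extensional_def
    proof (intro conjI ballI allI impI)
      fix j assume "j \<in> {..<L}"
      then have "u j \<in> Vc r (Suc n)" using u1 by simp
      then show "(if j<L then u j n else undefined) \<in> {r,-r}"
        using \<open>j \<in> {..<L}\<close> unfolding Vc_def by auto
    qed simp
    ultimately show "jj u \<in> Tc r L n \<times> Wv L r"
      unfolding jj_def by simp
    have "(\<Sum>j<L. (if j<L then (u j)(n:=0) else undefined) k) = (\<Sum>j<L. u j k)" if "k < n" for k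
      using that by (intro sum.cong) auto
    then have "A (fst (jj u)) = (\<Prod>k<n. g (\<Sum>j<L. u j k))"
      unfolding A_def jj_def by (intro prod.cong) auto
    moreover have "B (snd (jj u)) = g (\<Sum>j<L. u j n)"
    proof -
      have "(\<Sum>j<L. (if j<L then u j n else undefined)) = (\<Sum>j<L. u j n)"
        by (intro sum.cong) auto
      then show ?thesis unfolding B_def jj_def by simp
    qed
    ultimately show "(case jj u of (t,v) \<Rightarrow> A t * B v) = (\<Prod>k<Suc n. g (\<Sum>j<L. u j k))"
      by (simp add: case_prod_beta)
  next
    fix b assume b: "b \<in> Tc r L n \<times> Wv L r"
    obtain t v where bt: "b = (t,v)" by (cases b)
    have t1: "\<And>j. j < L \<Longrightarrow> t j \<in> Vc r n" and t2: "\<And>j. j \<ge> L \<Longrightarrow> t j = undefined"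
      using b bt unfolding Tc_def by (auto simp: PiE_def extensional_def)
    have v1: "\<And>j. j < L \<Longrightarrow> v j \<in> {r,-r}" and v2: "\<And>j. j \<ge> L \<Longrightarrow> v j = undefined"
      using b bt unfolding Wv_def by (auto simp: PiE_def extensional_def)
    have tn: "\<And>j. j < L \<Longrightarrow> t j n = 0" using t1 unfolding Vc_def by auto
    show "jj (ii b) = b"
      unfolding ii_def jj_def bt using t2 v2 tn by (auto intro!: ext)
    show "ii b \<in> Tc r L (Suc n)"
      unfolding ii_def bt Tc_def PiE_iff extensional_def
    proof (intro conjI ballI allI impI)
      fix j assume j: "j \<in> {..<L}"
      then have "t j \<in> Vc r n" "v j \<in> {r,-r}" using t1 v1 by auto
      then show "(case (t, v) of (t, v) \<Rightarrow> \<lambda>j. if j < L then (t j)(n := v j) else undefined) j \<in> Vc r (Suc n)"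
        using j unfolding Vc_def by (auto simp: less_Suc_eq)
    qed simp
  qed
  also have "\<dots> = (\<Sum>t\<in>Tc r L n. \<Sum>v\<in>Wv L r. A t * B v)"
    by (rule sum.cartesian_product[symmetric])
  also have "\<dots> = (\<Sum>t\<in>Tc r L n. A t) * (\<Sum>v\<in>Wv L r. B v)"
    by (simp add: sum_product)
  also have "\<dots> = (\<Sum>v\<in>Wv L r. g (\<Sum>j<L. v j))^Suc n"
    using Suc.IH unfolding A_def B_def by simp
  finally show ?case .
qed

lemma chernoff:
  assumes "r \<noteq> 0" "mu \<ge> 0"
  shows "real (card {t\<in>Tc r L n. thr \<le> (\<Sum>k<n. (\<Sum>j<L. t j k)^2)})
         \<le> exp (-mu*thr) * (\<Sum>v\<in>Wv L r. exp (mu*(\<Sum>j<L. v j)^2))^n"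
proof -
  let ?BT = "{t\<in>Tc r L n. thr \<le> (\<Sum>k<n. (\<Sum>j<L. t j k)^2)}"
  let ?F = "\<lambda>t. exp (mu * ((\<Sum>k<n. (\<Sum>j<L. t j k)^2) - thr))"
  have fin: "finite (Tc r L n)" by (rule finite_Tc[OF assms(1)])
  have "real (card ?BT) = (\<Sum>t\<in>?BT. 1)" by simp
  also have "\<dots> \<le> (\<Sum>t\<in>?BT. ?F t)"
    using assms(2) by (intro sum_mono) (auto intro!: one_le_exp_iff[THEN iffD2] mult_nonneg_nonneg)
  also have "\<dots> \<le> (\<Sum>t\<in>Tc r L n. ?F t)"
    using fin by (intro sum_mono2) auto
  also have "\<dots> = exp (-mu*thr) * (\<Sum>t\<in>Tc r L n. \<Prod>k<n. exp (mu * (\<Sum>j<L. t j k)^2))"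
  proof -
    have "?F t = exp(-mu*thr) * (\<Prod>k<n. exp (mu * (\<Sum>j<L. t j k)^2))" for t
    proof -
      have "?F t = exp(-mu*thr) * exp (\<Sum>k<n. mu * (\<Sum>j<L. t j k)^2)"
        by (simp add: exp_add[symmetric] sum_distrib_left right_diff_distrib)
      then show ?thesis by (simp add: exp_sum)
    qed
    then show ?thesis by (simp add: sum_distrib_left)
  qed
  also have "\<dots> = exp (-mu*thr) * (\<Sum>v\<in>Wv L r. exp (mu*(\<Sum>j<L. v j)^2))^n"
    using tuple_sum[where g="\<lambda>x. exp (mu * x ^ 2)"] by simp
  finally show ?thesis .
qed

lemma choose_ratio:
  assumes "L \<le> m" "m \<le> Q"
  shows "real (m choose L) * real Q ^ L \<le> real (Q choose L) * real m ^ L"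
proof -
  have eq1: "real (m choose L) = (\<Prod>i = 0..<L. real (m - i) / real (L - i))"
    using assms(1) by (rule binomial_altdef_of_nat)
  have eq1': "real (Q choose L) = (\<Prod>i = 0..<L. real (Q - i) / real (L - i))"
    using assms by (intro binomial_altdef_of_nat) simp
  have eq2: "\<And>x::real. x ^ L = (\<Prod>i = 0..<L. x)" by simp
  have "real (m choose L) * real Q ^ L = (\<Prod>i = 0..<L. real (m - i) / real (L - i) * real Q)"
    by (simp only: eq1 eq2[of "real Q"] prod.distrib)
  also have "\<dots> \<le> (\<Prod>i = 0..<L. real (Q - i) / real (L - i) * real m)"
  proof (intro prod_mono conjI)
    fix i assume i: "i \<in> {0..<L}"
    then have i1: "i < L" by simp
    have e1: "real (m - i) = real m - real i" using i1 assms by simp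
    have e2: "real (Q - i) = real Q - real i" using i1 assms by simp
    have Lpos: "real (L - i) > 0" using i1 by simp
    show "0 \<le> real (m - i) / real (L - i) * real Q" by simp
    have "(real m - real i) * real Q \<le> (real Q - real i) * real m"
    proof -
      have "real i * real m \<le> real i * real Q" using assms by (intro mult_left_mono) auto
      then show ?thesis by (simp add: algebra_simps)
    qed
    then have "(real m - real i) * real Q / real (L - i) \<le> (real Q - real i) * real m / real (L - i)"
      using Lpos by (simp add: divide_right_mono)
    then show "real (m - i) / real (L - i) * real Q \<le> real (Q - i) / real (L - i) * real m"
      unfolding e1 e2 by (simp add: field_simps)
  qed
  also have "\<dots> = real (Q choose L) * real m ^ L"
    by (simp only: eq1' eq2[of "real m"] prod.distrib)
  finally show ?thesis .
qed

lemma count_supersets: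
  assumes "finite V" "e \<subseteq> V" "card e = L" "L \<le> m"
  shows "card {X. X \<subseteq> V \<and> card X = m \<and> e \<subseteq> X} = (card V - L) choose (m - L)"
proof -
  have fe: "finite e" using assms finite_subset by blast
  have "{X. X \<subseteq> V \<and> card X = m \<and> e \<subseteq> X} = (\<lambda>Y. Y \<union> e) ` {Y. Y \<subseteq> V - e \<and> card Y = m - L}"
  proof (intro set_eqI iffI)
    fix X assume X: "X \<in> {X. X \<subseteq> V \<and> card X = m \<and> e \<subseteq> X}"
    then have "X - e \<subseteq> V - e" "card (X - e) = m - L" "X = (X - e) \<union> e"
      using assms fe by (auto simp: card_Diff_subset)
    then show "X \<in> (\<lambda>Y. Y \<union> e) ` {Y. Y \<subseteq> V - e \<and> card Y = m - L}" by blast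
  next
    fix X assume "X \<in> (\<lambda>Y. Y \<union> e) ` {Y. Y \<subseteq> V - e \<and> card Y = m - L}"
    then obtain Y where Y: "Y \<subseteq> V - e" "card Y = m - L" "X = Y \<union> e" by auto
    have fY: "finite Y" using Y(1) assms finite_subset by blast
    have "Y \<inter> e = {}" using Y(1) by auto
    then have "card X = m - L + L" using Y fY fe assms by (simp add: card_Un_disjoint)
    then show "X \<in> {X. X \<subseteq> V \<and> card X = m \<and> e \<subseteq> X}" using Y assms by auto
  qed
  moreover have "inj_on (\<lambda>Y. Y \<union> e) {Y. Y \<subseteq> V - e \<and> card Y = m - L}"
    by (intro inj_onI) blast
  ultimately have "card {X. X \<subseteq> V \<and> card X = m \<and> e \<subseteq> X} = card {Y. Y \<subseteq> V - e \<and> card Y = m - L}"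
    by (simp add: card_image)
  also have "\<dots> = card (V - e) choose (m - L)"
    using assms by (intro n_subsets) auto
  also have "card (V - e) = card V - L" using assms fe by (simp add: card_Diff_subset)
  finally show ?thesis .
qed

lemma exists_sparse:
  fixes V :: "'a set" and E :: "'a set set"
  assumes fV: "finite V" and E: "\<And>e. e \<in> E \<Longrightarrow> e \<subseteq> V \<and> card e = L" and Lm: "L \<le> m" and mQ: "m \<le> card V"
  shows "\<exists>X. X \<subseteq> V \<and> card X = m \<and>
    real (card {e\<in>E. e \<subseteq> X}) * real (card V) ^ L \<le> real (card E) * real m ^ L"
proof -
  define Q where "Q = card V"
  define F where "F = {X. X \<subseteq> V \<and> card X = m}"
  define D where "D = (Q - L) choose (m - L)"
  have fF: "finite F" unfolding F_def using fV by simp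
  have cF: "card F = Q choose m" unfolding F_def Q_def using fV by (rule n_subsets)
  have fE: "finite E" using E fV by (metis finite_Pow_iff rev_finite_subset subsetI PowI)
  have sumeq: "(\<Sum>X\<in>F. real (card {e\<in>E. e \<subseteq> X})) = real (card E) * real D"
  proof -
    have "(\<Sum>X\<in>F. real (card {e\<in>E. e \<subseteq> X})) = (\<Sum>X\<in>F. \<Sum>e\<in>E. if e \<subseteq> X then 1 else 0)"
    proof -
      have "\<And>X. {e\<in>E. e \<subseteq> X} = E \<inter> {e. e \<subseteq> X}" by auto
      then show ?thesis using fE by (simp add: sum.If_cases)
    qed
    also have "\<dots> = (\<Sum>e\<in>E. \<Sum>X\<in>F. if e \<subseteq> X then 1 else 0)"
      by (rule sum.swap)
    also have "\<dots> = (\<Sum>e\<in>E. real D)"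
    proof (intro sum.cong refl)
      fix e assume e: "e \<in> E"
      have "(\<Sum>X\<in>F. if e \<subseteq> X then 1 else (0::real)) = real (card {X\<in>F. e \<subseteq> X})"
      proof -
        have "{X\<in>F. e \<subseteq> X} = F \<inter> Collect ((\<subseteq>) e)" by auto
        then show ?thesis using fF by (simp add: sum.If_cases)
      qed
      also have "{X\<in>F. e \<subseteq> X} = {X. X \<subseteq> V \<and> card X = m \<and> e \<subseteq> X}" unfolding F_def by auto
      also have "card \<dots> = D" unfolding D_def Q_def using E[OF e] fV Lm by (intro count_supersets) auto
      finally show "(\<Sum>X\<in>F. if e \<subseteq> X then 1 else (0::real)) = real D" .
    qed
    finally show ?thesis by simp
  qed
  have Fne: "F \<noteq> {}"
  proof -
    have "card F > 0" unfolding cF Q_def using mQ by simp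
    then show ?thesis by auto
  qed
  have "\<exists>X\<in>F. real (card {e\<in>E. e \<subseteq> X}) * real (Q choose m) \<le> real (card E) * real D"
  proof (rule ccontr)
    assume "\<not> ?thesis"
    then have lt: "\<And>X. X \<in> F \<Longrightarrow> real (card E) * real D < real (card {e\<in>E. e \<subseteq> X}) * real (Q choose m)"
      by auto
    have "(\<Sum>X\<in>F. real (card E) * real D) < (\<Sum>X\<in>F. real (card {e\<in>E. e \<subseteq> X}) * real (Q choose m))"
      using fF Fne lt by (intro sum_strict_mono) auto
    also have "\<dots> = real (card E) * real D * real (Q choose m)"
      using sumeq by (simp add: sum_distrib_right[symmetric])
    finally show False using cF by simp
  qed
  then obtain X where X: "X \<in> F" "real (card {e\<in>E. e \<subseteq> X}) * real (Q choose m) \<le> real (card E) * real D"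
    by blast
  define f where "f = real (card {e\<in>E. e \<subseteq> X})"
  have cm: "(Q choose m) * (m choose L) = (Q choose L) * D"
    unfolding D_def Q_def using Lm mQ by (rule choose_mult)
  have Dpos: "real D > 0" unfolding D_def using Lm mQ Q_def by simp
  have QLpos: "real (Q choose L) > 0" using Lm mQ Q_def by simp
  have "f * real (Q choose L) * real D = f * real (Q choose m) * real (m choose L)"
    using arg_cong[OF cm, of real] by (simp add: mult_ac)
  also have "\<dots> \<le> real (card E) * real D * real (m choose L)"
    using X(2) unfolding f_def by (intro mult_right_mono) auto
  finally have "f * real (Q choose L) \<le> real (card E) * real (m choose L)"
    using Dpos by (simp add: mult_ac)
  then have "f * real (Q choose L) * real Q ^ L \<le> real (card E) * (real (m choose L) * real Q ^ L)"
    using mult_right_mono[of "f * real (Q choose L)" "real (card E) * real (m choose L)" "real Q ^ L"]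
    by (simp add: mult_ac)
  also have "\<dots> \<le> real (card E) * (real (Q choose L) * real m ^ L)"
    using choose_ratio[OF Lm mQ[folded Q_def]] by (intro mult_left_mono) auto
  finally have "f * real Q ^ L \<le> real (card E) * real m ^ L"
    using QLpos by (simp add: mult_ac)
  then show ?thesis using X(1) unfolding F_def f_def Q_def by blast
qed

lemma expurgate:
  fixes V :: "'a set" and E :: "'a set set"
  assumes fV: "finite V" and E: "\<And>e. e \<in> E \<Longrightarrow> card e = L" and L: "L > 0" and XV: "X \<subseteq> V"
  shows "\<exists>X'. X' \<subseteq> X \<and> real (card X) - real (card {e\<in>E. e \<subseteq> X}) \<le> real (card X') \<and> (\<forall>S. S \<subseteq> X' \<longrightarrow> S \<notin> E)"
proof -
  define D where "D = (\<lambda>e. SOME x. x \<in> e) ` {e\<in>E. e \<subseteq> X}"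
  have fX: "finite X" using fV XV finite_subset by blast
  have fEX: "finite {e\<in>E. e \<subseteq> X}"
    by (rule finite_subset[of _ "Pow X"]) (use fX in auto)
  have cD: "card D \<le> card {e\<in>E. e \<subseteq> X}" unfolding D_def by (rule card_image_le[OF fEX])
  have fD: "finite D" unfolding D_def using fEX by simp
  have "card X \<le> card (X - D) + card D"
  proof -
    have "card X \<le> card ((X - D) \<union> D)" using fD fX by (intro card_mono) auto
    also have "\<dots> \<le> card (X - D) + card D" by (rule card_Un_le)
    finally show ?thesis .
  qed
  then have c1: "real (card X) - real (card {e\<in>E. e \<subseteq> X}) \<le> real (card (X - D))"
    using cD by linarith
  have c2: "S \<notin> E" if "S \<subseteq> X - D" for S
  proof
    assume SE: "S \<in> E"
    have "S \<noteq> {}" using E[OF SE] L by auto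
    then have "(SOME x. x \<in> S) \<in> S" by (simp add: some_in_eq)
    moreover have "(SOME x. x \<in> S) \<in> D" unfolding D_def using SE that by auto
    ultimately show False using that by auto
  qed
  show ?thesis using c1 c2 by (intro exI[of _ "X - D"]) auto
qed

lemma Vc_sq: "x \<in> Vc r n \<Longrightarrow> i < n \<Longrightarrow> (x i)^2 = r^2"
  unfolding Vc_def by auto

lemma Vc_ball:
  assumes "x \<in> Vc r n"
  shows "x \<in> euclid_ball n (sqrt (real n * r^2))"
proof -
  have "sqnorm n x = real n * r^2"
    unfolding sqnorm_def using Vc_sq[OF assms] by simp
  then show ?thesis using assms unfolding euclid_ball_def Vc_def by auto
qed

lemma avg_formula:
  assumes S: "S \<subseteq> Vc r n" "finite S" "card S = L" "L > 0"
  shows "avg_rad_sq n S = real n * r^2 - (\<Sum>k<n. ((\<Sum>x\<in>S. x k) / real L)^2)"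
proof -
  define c where "c k = (\<Sum>x\<in>S. x k) / real L" for k
  have cen: "centroid n S i = c i" if "i < n" for i
    unfolding centroid_def c_def using that S by simp
  have inner: "(\<Sum>x\<in>S. (x i - c i)^2) = real L * (r^2 - (c i)^2)" if i: "i < n" for i
  proof -
    have "(\<Sum>x\<in>S. (x i - c i)^2) = (\<Sum>x\<in>S. (x i)^2) - 2 * c i * (\<Sum>x\<in>S. x i) + real L * (c i)^2"
      using S by (simp add: power2_diff sum.distrib sum_subtractf sum_distrib_left mult_ac)
    also have "(\<Sum>x\<in>S. (x i)^2) = real L * r^2"
    proof -
      have "(\<Sum>x\<in>S. (x i)^2) = (\<Sum>x\<in>S. r^2)"
        using S(1) Vc_sq[OF _ i] by (intro sum.cong) auto
      then show ?thesis using S by simp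
    qed
    also have "(\<Sum>x\<in>S. x i) = real L * c i" unfolding c_def using S by simp
    finally show ?thesis by (simp add: algebra_simps power2_eq_square)
  qed
  have "(\<Sum>x\<in>S. sqnorm n (\<lambda>i. x i - centroid n S i)) = (\<Sum>x\<in>S. \<Sum>i<n. (x i - c i)^2)"
    unfolding sqnorm_def using cen by (intro sum.cong) auto
  also have "\<dots> = (\<Sum>i<n. \<Sum>x\<in>S. (x i - c i)^2)" by (rule sum.swap)
  also have "\<dots> = (\<Sum>i<n. real L * (r^2 - (c i)^2))" using inner by (intro sum.cong) auto
  finally have "avg_rad_sq n S = (\<Sum>i<n. real L * (r^2 - (c i)^2)) / real L"
    unfolding avg_rad_sq_def using S by simp
  also have "\<dots> = (\<Sum>i<n. (r^2 - (c i)^2))"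
    using S by (simp add: sum_distrib_left[symmetric])
  also have "\<dots> = real n * r^2 - (\<Sum>k<n. (c k)^2)"
    by (simp add: sum_subtractf)
  finally show ?thesis unfolding c_def .
qed

lemma bad_sets_card:
  assumes r: "r \<noteq> 0" and L: "L > 0"
  shows "card {S. S \<subseteq> Vc r n \<and> card S = L \<and> avg_rad_sq n S \<le> real n * N}
    \<le> card {t\<in>Tc r L n. real L^2 * real n * (r^2 - N) \<le> (\<Sum>k<n. (\<Sum>j<L. t j k)^2)}"
proof -
  let ?E = "{S. S \<subseteq> Vc r n \<and> card S = L \<and> avg_rad_sq n S \<le> real n * N}"
  let ?BT = "{t\<in>Tc r L n. real L^2 * real n * (r^2 - N) \<le> (\<Sum>k<n. (\<Sum>j<L. t j k)^2)}"
  have fBT: "finite ?BT" using finite_Tc[OF r] by simp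
  have "?E \<subseteq> (\<lambda>t. t ` {..<L}) ` ?BT"
  proof
    fix S assume SE: "S \<in> ?E"
    then have SV: "S \<subseteq> Vc r n" and cS: "card S = L" and av: "avg_rad_sq n S \<le> real n * N" by auto
    have fS: "finite S" using SV finite_Vc[OF r] finite_subset by blast
    obtain f where f: "bij_betw f {0..<L} S" using ex_bij_betw_nat_finite[OF fS] cS by auto
    then have f': "bij_betw f {..<L} S" by (simp add: atLeast0LessThan)
    define t where "t = restrict f {..<L}"
    have timg: "t ` {..<L} = S" unfolding t_def using f' by (simp add: bij_betw_def)
    have tT: "t \<in> Tc r L n" unfolding t_def Tc_def using f' SV by (auto simp: bij_betw_def)
    have sums: "(\<Sum>j<L. t j k) = (\<Sum>x\<in>S. x k)" for k
    proof -
      have "(\<Sum>j<L. t j k) = (\<Sum>j<L. f j k)" unfolding t_def by simp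
      also have "\<dots> = (\<Sum>x\<in>S. x k)" by (rule sum.reindex_bij_betw[OF f', of "\<lambda>x. x k"])
      finally show ?thesis .
    qed
    have "real n * r^2 - (\<Sum>k<n. ((\<Sum>x\<in>S. x k) / real L)^2) \<le> real n * N"
      using av avg_formula[OF SV fS cS L] by simp
    then have "real n * (r^2 - N) \<le> (\<Sum>k<n. ((\<Sum>x\<in>S. x k))^2) / real L^2"
      by (simp add: power_divide sum_divide_distrib[symmetric] algebra_simps)
    then have "real L^2 * real n * (r^2 - N) \<le> (\<Sum>k<n. ((\<Sum>x\<in>S. x k))^2)"
      using L by (simp add: field_simps)
    then have "t \<in> ?BT" using tT sums by simp
    then show "S \<in> (\<lambda>t. t ` {..<L}) ` ?BT" using timg by blast
  qed
  then have "card ?E \<le> card ((\<lambda>t. t ` {..<L}) ` ?BT)"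
    using fBT by (intro card_mono) auto
  also have "\<dots> \<le> card ?BT" using fBT by (rule card_image_le)
  finally show ?thesis .
qed

lemma code_le_cap:
  assumes "avg_rad_list_decodable n P N L C"
  shows "ereal (code_rate n C) \<le> (SUP C\<in>{C. avg_rad_list_decodable n P N L C}. ereal (code_rate n C))"
  using assms by (intro SUP_upper) auto

lemma good_code_exists:
  fixes P N tau :: real and L n :: nat
  assumes L2: "L \<ge> 2" and P: "P > 0" and N: "N > 0"
    and NP: "N / P \<le> (real L - 1) / real L"
    and tau_def: "tau = (1/2) * (1 - real L * N / ((real L - 1) * P)
                    - (1 / (real L - 1)) * ln (real L * (P - N) / P))"
    and tpos: "tau > 0" and n1: "n \<ge> 1" and big: "exp (real n * tau) \<ge> 2 * real L + 4"
  shows "\<exists>C. avg_rad_list_decodable n P N L C \<and> code_rate n C \<ge> tau - ln 8 / real n"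
proof -
  define r where "r = sqrt P"
  have r2: "r^2 = P" unfolding r_def using P by simp
  have r0: "r \<noteq> 0" unfolding r_def using P by simp
  have Lpos: "L > 0" using L2 by simp
  have L1: "real L - 1 > 0" using L2 by simp
  define a where "a = real L * (P - N) / P"
  have a1: "a \<ge> 1"
  proof -
    have "N * real L \<le> (real L - 1) * P" using NP P Lpos by (simp add: field_simps)
    then have "P \<le> real L * (P - N)" by (simp add: algebra_simps)
    then show ?thesis unfolding a_def using P by (simp add: field_simps)
  qed
  define lam where "lam = (1 - 1/a) / 2"
  have lam0: "0 \<le> lam" unfolding lam_def using a1 by (simp add: field_simps)
  have lam1: "lam < 1/2" unfolding lam_def using a1 by (simp add: field_simps)
  define Es where "Es = (real L - 1) * tau"
  have Es_eq: "Es = lam * a - ln a / 2"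
  proof -
    have aux: "\<And>c q l. c > 0 \<Longrightarrow> c * ((1/2) * (1 - q / (c * P) - (1/c) * l)) = (1/2) * (c - q / P - l)"
      using P by (simp add: field_simps)
    have "Es = (1/2) * ((real L - 1) - real L * N / P - ln a)"
      unfolding Es_def tau_def a_def by (rule aux[OF L1])
    also have "\<dots> = lam * a - ln a / 2"
    proof -
      have "lam * a = (a - 1)/2" unfolding lam_def using a1 by (simp add: field_simps)
      moreover have "a - 1 = (real L - 1) - real L * N / P" unfolding a_def using P by (simp add: field_simps)
      ultimately show ?thesis by simp
    qed
    finally show ?thesis .
  qed
  have tau_half: "tau \<le> 1/2"
  proof -
    have "ln (real L * (P - N) / P) \<ge> 0" using a1 unfolding a_def by simp
    moreover have "real L * N / ((real L - 1) * P) \<ge> 0" using N P L1 by simp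
    ultimately have "(1 / (real L - 1)) * ln (real L * (P - N) / P) \<ge> 0" "real L * N / ((real L - 1) * P) \<ge> 0"
      using L1 by auto
    moreover have "\<And>A B::real. 0 \<le> A \<Longrightarrow> 0 \<le> B \<Longrightarrow> 1/2 * (1 - A - B) \<le> 1/2" by simp
    ultimately show ?thesis unfolding tau_def by blast
  qed
  define mu where "mu = lam / (real L * r^2)"
  define thr where "thr = real L^2 * real n * (r^2 - N)"
  have muthr: "mu * thr = lam * real n * a"
    unfolding mu_def thr_def a_def r2 using P Lpos by (simp add: field_simps power2_eq_square)
  define G where "G = (\<Sum>v\<in>Wv L r. exp (mu*(\<Sum>j<L. v j)^2))"
  have G0: "G \<ge> 0" unfolding G_def by (intro sum_nonneg) auto
  have Gle: "G \<le> 2^L * exp (ln a / 2)"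
  proof -
    have "G \<le> 2^L * (1 - 2*lam) powr (-1/2)"
      unfolding G_def mu_def by (rule mgf_bound[OF r0 Lpos lam0 lam1])
    also have "(1 - 2*lam) powr (-1/2) = exp (ln a / 2)"
    proof -
      have "1 - 2*lam = 1/a" unfolding lam_def by (simp add: field_simps)
      moreover have "(1/a) powr (-1/2) = exp (ln a / 2)"
        using a1 by (simp add: powr_def ln_div)
      ultimately show ?thesis by simp
    qed
    finally show ?thesis .
  qed
  define V where "V = Vc r n"
  define E where "E = {S. S \<subseteq> V \<and> card S = L \<and> avg_rad_sq n S \<le> real n * N}"
  have fV: "finite V" unfolding V_def by (rule finite_Vc[OF r0])
  have cV: "card V = 2^n" unfolding V_def by (rule card_Vc[OF r0])
  have cE: "real (card E) \<le> 2^(L*n) * exp (- real n * Es)"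
  proof -
    have "card E \<le> card {t\<in>Tc r L n. thr \<le> (\<Sum>k<n. (\<Sum>j<L. t j k)^2)}"
      unfolding E_def V_def thr_def by (rule bad_sets_card[OF r0 Lpos])
    then have "real (card E) \<le> real (card {t\<in>Tc r L n. thr \<le> (\<Sum>k<n. (\<Sum>j<L. t j k)^2)})"
      by simp
    also have "\<dots> \<le> exp (-mu*thr) * G^n"
      unfolding G_def by (rule chernoff[OF r0]) (use lam0 in \<open>simp add: mu_def\<close>)
    also have "\<dots> \<le> exp (-mu*thr) * (2^L * exp (ln a / 2))^n"
      using G0 Gle by (intro mult_left_mono power_mono) auto
    also have "\<dots> = 2^(L*n) * exp (- real n * Es)"
    proof -
      have "(2^L * exp (ln a / 2))^n = (2::real)^(L*n) * exp (real n * (ln a / 2))"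
        using exp_of_nat_mult[of n "ln a / 2"] by (simp add: power_mult_distrib power_mult)
      then have "exp (-mu*thr) * (2^L * exp (ln a / 2))^n = 2^(L*n) * (exp (-mu*thr) * exp (real n * (ln a / 2)))"
        by simp
      also have "exp (-mu*thr) * exp (real n * (ln a / 2)) = exp (- real n * Es)"
      proof -
        have "-mu*thr + real n * (ln a / 2) = - real n * Es"
          using muthr unfolding Es_eq by (simp add: algebra_simps)
        then show ?thesis by (simp add: exp_add[symmetric])
      qed
      finally show ?thesis .
    qed
    finally show ?thesis .
  qed
  define x where "x = exp (real n * tau)"
  have x4: "x \<ge> 2 * real L + 4" using big unfolding x_def .
  define m where "m = nat \<lfloor>x/2\<rfloor>"
  have fl: "\<lfloor>x/2\<rfloor> \<ge> 0" using x4 by simp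
  have mfl: "real m = real_of_int \<lfloor>x/2\<rfloor>" unfolding m_def using fl by simp
  have m1: "real m \<le> x/2" unfolding mfl by (rule of_int_floor_le)
  have m2: "real m \<ge> x/2 - 1" unfolding mfl using floor_correct[of "x/2"] by linarith
  have Lm: "L \<le> m" using m2 x4 by linarith
  have mQ: "m \<le> card V"
  proof -
    have "exp (1/2::real) \<le> 2" using exp_bound_half[of "1/2::real"] by simp
    then have "exp (1/2::real) ^ n \<le> 2^n" by (intro power_mono) auto
    moreover have "x \<le> exp (1/2::real) ^ n"
      unfolding x_def exp_of_nat_mult[symmetric] using tau_half n1 by (simp add: mult_left_mono)
    ultimately have "real m \<le> 2^n" using m1 x4 by linarith
    then show ?thesis unfolding cV by (metis of_nat_le_iff of_nat_numeral of_nat_power)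
  qed
  have Edef: "\<And>e. e \<in> E \<Longrightarrow> e \<subseteq> V \<and> card e = L" unfolding E_def by auto
  obtain X where X: "X \<subseteq> V" "card X = m"
    "real (card {e\<in>E. e \<subseteq> X}) * real (card V) ^ L \<le> real (card E) * real m ^ L"
    using exists_sparse[OF fV Edef Lm mQ] by blast
  define f where "f = real (card {e\<in>E. e \<subseteq> X})"
  have fle: "f \<le> real m / 2"
  proof -
    have p2: "(2::real)^(L*n) = (real (2^n))^L" by (simp add: power_mult[symmetric] mult.commute)
    have "f * (2^(L*n)) \<le> real (card E) * real m ^ L"
      using X(3) unfolding f_def cV p2 .
    also have "\<dots> \<le> 2^(L*n) * exp (- real n * Es) * real m ^ L"
      using cE by (intro mult_right_mono) auto
    finally have "f * (2^(L*n)) \<le> 2^(L*n) * exp (- real n * Es) * real m ^ L" .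
    then have f1: "f \<le> exp (- real n * Es) * real m ^ L"
      by (simp add: mult_ac)
    have "real m ^ (L - 1) \<le> (x/2) ^ (L - 1)"
      using m1 by (intro power_mono) auto
    also have "(x/2) ^ (L-1) = x^(L-1) / 2^(L-1)" by (simp add: power_divide)
    also have "\<dots> \<le> x^(L-1) / 2"
    proof -
      have "(2::real)^1 \<le> 2^(L-1)" using L2 by (intro power_increasing) auto
      moreover have "0 \<le> x^(L-1)" unfolding x_def by simp
      ultimately show ?thesis by (intro divide_left_mono) auto
    qed
    also have "x^(L-1) = exp (real n * Es)"
      unfolding x_def Es_def exp_of_nat_mult[symmetric] using L2 by (simp add: of_nat_diff mult_ac)
    finally have mL: "real m ^ (L-1) \<le> exp (real n * Es) / 2" .
    obtain k where k: "L = Suc k" using Lpos gr0_implies_Suc by blast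
    have "real m ^ L = real m * real m ^ (L-1)" unfolding k by simp
    then have "exp (- real n * Es) * real m ^ L \<le> exp (- real n * Es) * (real m * (exp (real n * Es) / 2))"
      using mL by (simp add: mult_left_mono)
    also have "\<dots> = real m / 2" by (simp add: exp_minus field_simps)
    finally show ?thesis using f1 by simp
  qed
  have EL: "\<And>e. e \<in> E \<Longrightarrow> card e = L" using Edef by blast
  obtain X' where X': "X' \<subseteq> X" "real (card X) - f \<le> real (card X')" "\<forall>S. S \<subseteq> X' \<longrightarrow> S \<notin> E"
    using expurgate[OF fV EL Lpos X(1)] unfolding f_def by blast
  have cX': "real (card X') \<ge> x / 8"
    using X'(2) X(2) fle m2 x4 by linarith
  have valid: "avg_rad_list_decodable n P N L X'"
    unfolding avg_rad_list_decodable_def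
  proof (intro conjI allI impI)
    show "finite X'" using finite_subset[OF X'(1) finite_subset[OF X(1) fV]] .
    show "X' \<subseteq> euclid_ball n (sqrt (real n * P))"
    proof
      fix y assume "y \<in> X'"
      then have "y \<in> Vc r n" using X'(1) X(1) unfolding V_def by blast
      from Vc_ball[OF this] show "y \<in> euclid_ball n (sqrt (real n * P))" unfolding r2 .
    qed
    fix S assume S: "S \<subseteq> X'" "card S = L"
    then have nE: "S \<notin> E" using X'(3) by blast
    have SV: "S \<subseteq> V" using S X'(1) X(1) by blast
    have "\<not> (avg_rad_sq n S \<le> real n * N)"
    proof
      assume "avg_rad_sq n S \<le> real n * N"
      then have "S \<in> E" unfolding E_def using SV S(2) by blast
      then show False using nE by contradiction
    qed
    then show "real n * N < avg_rad_sq n S" by simp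
  qed
  have "code_rate n X' \<ge> tau - ln 8 / real n"
  proof -
    have xpos: "x / 8 > 0" unfolding x_def by simp
    have "ln (x/8) \<le> ln (real (card X'))" using cX' xpos by simp
    moreover have "ln (x/8) = real n * tau - ln 8" unfolding x_def by (simp add: ln_div)
    ultimately have "real n * tau - ln 8 \<le> ln (real (card X'))" by simp
    then have "(real n * tau - ln 8) / real n \<le> ln (real (card X')) / real n"
      using n1 by (intro divide_right_mono) auto
    moreover have "(real n * tau - ln 8) / real n = tau - ln 8 / real n"
      using n1 by (simp add: field_simps)
    ultimately show ?thesis unfolding code_rate_def by simp
  qed
  then show ?thesis using valid by blast
qed


theorem mainTheorem6:
  fixes P N :: real and L :: nat
  assumes "L \<ge> 2" and "P > 0" and "N > 0"
    and "N / P \<le> (real L - 1) / real L"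
  shows "avg_rad_capacity L P N \<ge>
    ereal ((1/2) * (1 - real L * N / ((real L - 1) * P)
                    - (1 / (real L - 1)) * ln (real L * (P - N) / P)))"
proof -
  define tau where "tau = (1/2) * (1 - real L * N / ((real L - 1) * P)
                    - (1 / (real L - 1)) * ln (real L * (P - N) / P))"
  define Cap where "Cap n = (SUP C\<in>{C. avg_rad_list_decodable n P N L C}. ereal (code_rate n C))" for n
  have capd: "avg_rad_capacity L P N = limsup Cap" unfolding avg_rad_capacity_def Cap_def ..
  have "ereal tau \<le> limsup Cap"
  proof (cases "tau > 0")
    case False
    have "ereal tau \<le> Cap n" for n
    proof -
      have "avg_rad_list_decodable n P N L {}"
        unfolding avg_rad_list_decodable_def using assms(1) by auto
      then have "ereal (code_rate n {}) \<le> Cap n" unfolding Cap_def by (rule code_le_cap)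
      moreover have "code_rate n {} = 0" unfolding code_rate_def by simp
      ultimately show ?thesis using False by (metis ereal_less_eq(3) order_trans not_less)
    qed
    then have "limsup (\<lambda>_. ereal tau) \<le> limsup Cap" by (intro Limsup_mono) auto
    then show ?thesis by (simp add: Limsup_const)
  next
    case True
    define n0 where "n0 = max 1 (nat \<lceil>ln (2 * real L + 4) / tau\<rceil>)"
    have ev: "ereal (tau - ln 8 / real n) \<le> Cap n" if n: "n \<ge> n0" for n
    proof -
      have n1: "n \<ge> 1" using n unfolding n0_def by simp
      have "ln (2 * real L + 4) / tau \<le> real (nat \<lceil>ln (2 * real L + 4) / tau\<rceil>)"
        by (rule real_nat_ceiling_ge)
      also have "\<dots> \<le> real n" using n unfolding n0_def by simp
      finally have "ln (2 * real L + 4) \<le> real n * tau" using True by (simp add: field_simps)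
      then have "exp (ln (2 * real L + 4)) \<le> exp (real n * tau)" by (simp only: exp_le_cancel_iff)
      moreover have "exp (ln (2 * real L + 4)) = 2 * real L + 4" by simp
      ultimately have big: "exp (real n * tau) \<ge> 2 * real L + 4" by simp
      obtain C where C: "avg_rad_list_decodable n P N L C" "code_rate n C \<ge> tau - ln 8 / real n"
        using good_code_exists[OF assms tau_def True n1 big] by blast
      have "ereal (tau - ln 8 / real n) \<le> ereal (code_rate n C)" using C(2) by simp
      also have "\<dots> \<le> Cap n" unfolding Cap_def by (rule code_le_cap[OF C(1)])
      finally show ?thesis .
    qed
    have "limsup (\<lambda>n. ereal (tau - ln 8 / real n)) \<le> limsup Cap"
      using ev by (intro Limsup_mono) (auto simp: eventually_sequentially)
    moreover have "limsup (\<lambda>n. ereal (tau - ln 8 / real n)) = ereal tau"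
    proof (rule lim_imp_Limsup)
      show "\<not> trivial_limit sequentially" by simp
      have "(\<lambda>n. tau - ln 8 / real n) \<longlonglongrightarrow> tau - 0"
        by (intro tendsto_diff tendsto_const lim_const_over_n)
      then show "(\<lambda>n. ereal (tau - ln 8 / real n)) \<longlonglongrightarrow> ereal tau"
        by (simp add: tendsto_ereal)
    qed
    ultimately show ?thesis by simp
  qed
  then show ?thesis unfolding capd tau_def .
qed

end
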